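(* Let $Q$ be a fixed IPC formula and let $\phi : K \to L$ be the map defined in the context. Then for every IPC formula $Z \in L$, $\phi(Z) \equiv QQZ$, i.e. $\phi(Z) \vdash_L (Z \supset Q) \supset Q$ and $(Z \supset Q) \supset Q \vdash_L \phi(Z)$.
   Context: $K$ is the set of PC formulas: built from propositional variables and a propositional constant $\mathfrak{f}$ using only the conditional $\supset$. $L \subseteq K$ is the set of IPC formulas: built from propositional variables using only $\supset$. IPC has Modus Ponens as its only rule and axioms all instances (with IPC formulas) of $(\#1)\ A \supset (B \supset A)$; $(\#2)\ [A \supset (B \supset C)] \supset [(A \supset B) \supset (A \supset C)]$; $(\mathbb{P})\ [(A \supset B) \supset A] \supset A$. $\Gamma \vdash_L Y$ means there is a deduction of $Y$ from hypotheses $\Gamma$ in IPC; $X \equiv Y$ means $X \vdash_L Y$ and $Y \vdash_L X$. For an IPC formula $Z$ write $QZ := Z \supset Q$ and $QQZ := (Z \supset Q)\supset Q$. The map $\phi : K \to L$ is defined by induction on the number of conditionals: $\phi(\mathfrak{f}) = Q$; $\phi(p) = QQp = (p \supset Q) \supset Q$ for each propositional variable $p$; and $\phi(X \supset Y) = \phi(X) \supset \phi(Y)$. *)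

theory Defs
  imports Main
begin

text \<open>PC formulas (the set K): propositional variables, the constant f, and the conditional.\<close>
datatype 'v form = Var 'v | Falsum | Imp "'v form" "'v form" (infixr "\<supset>" 60)

fun is_ipc :: "'v form \<Rightarrow> bool" where
  "is_ipc (Var p) = True"
| "is_ipc Falsum = False"
| "is_ipc (A \<supset> B) = (is_ipc A \<and> is_ipc B)"

definition L :: "'v form set" where
  "L = {A. is_ipc A}"

inductive deriv :: "'v form set \<Rightarrow> 'v form \<Rightarrow> bool" (infix "\<turnstile>\<^sub>L" 50)
  for \<Gamma> :: "'v form set" where
  hyp: "A \<in> \<Gamma> \<Longrightarrow> \<Gamma> \<turnstile>\<^sub>L A"
| ax1: "A \<in> L \<Longrightarrow> B \<in> L \<Longrightarrow> \<Gamma> \<turnstile>\<^sub>L A \<supset> (B \<supset> A)"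
| ax2: "A \<in> L \<Longrightarrow> B \<in> L \<Longrightarrow> C \<in> L \<Longrightarrow>
        \<Gamma> \<turnstile>\<^sub>L (A \<supset> (B \<supset> C)) \<supset> ((A \<supset> B) \<supset> (A \<supset> C))"
| axP: "A \<in> L \<Longrightarrow> B \<in> L \<Longrightarrow> \<Gamma> \<turnstile>\<^sub>L ((A \<supset> B) \<supset> A) \<supset> A"
| mp: "\<Gamma> \<turnstile>\<^sub>L A \<Longrightarrow> \<Gamma> \<turnstile>\<^sub>L A \<supset> B \<Longrightarrow> \<Gamma> \<turnstile>\<^sub>L B"

fun phi :: "'v form \<Rightarrow> 'v form \<Rightarrow> 'v form" where
  "phi Q Falsum = Q"
| "phi Q (Var p) = (Var p \<supset> Q) \<supset> Q"
| "phi Q (X \<supset> Y) = phi Q X \<supset> phi Q Y"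

end

theory Submission
  imports Defs
begin

lemma L_imp[simp]: "(A \<supset> B \<in> L) = (A \<in> L \<and> B \<in> L)"
  by (simp add: L_def)

lemma L_var[simp]: "Var p \<in> L"
  by (simp add: L_def)

lemma mono: "\<Gamma> \<turnstile>\<^sub>L A \<Longrightarrow> \<Gamma> \<subseteq> \<Delta> \<Longrightarrow> \<Delta> \<turnstile>\<^sub>L A"
  by (induction rule: deriv.induct) (auto intro: deriv.intros)

lemma inL: "\<Gamma> \<turnstile>\<^sub>L A \<Longrightarrow> \<Gamma> \<subseteq> L \<Longrightarrow> A \<in> L"
  by (induction rule: deriv.induct) auto

lemma imp_refl: "A \<in> L \<Longrightarrow> \<Gamma> \<turnstile>\<^sub>L A \<supset> A"
proof -
  assume a: "A \<in> L"
  have 1: "\<Gamma> \<turnstile>\<^sub>L (A \<supset> ((A \<supset> A) \<supset> A)) \<supset> ((A \<supset> (A \<supset> A)) \<supset> (A \<supset> A))"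
    using a by (intro deriv.ax2) auto
  have 2: "\<Gamma> \<turnstile>\<^sub>L A \<supset> ((A \<supset> A) \<supset> A)" using a by (intro deriv.ax1) auto
  have 3: "\<Gamma> \<turnstile>\<^sub>L A \<supset> (A \<supset> A)" using a by (intro deriv.ax1) auto
  show ?thesis using deriv.mp[OF 3 deriv.mp[OF 2 1]] .
qed

lemma ded_aux: "\<Delta> \<turnstile>\<^sub>L B \<Longrightarrow> \<Delta> = insert A \<Gamma> \<Longrightarrow> \<Delta> \<subseteq> L \<Longrightarrow> \<Gamma> \<turnstile>\<^sub>L A \<supset> B"
proof (induction rule: deriv.induct)
  case (hyp C)
  show ?case
  proof (cases "C = A")
    case True then show ?thesis using hyp imp_refl by auto
  next
    case False
    then have "C \<in> \<Gamma>" using hyp by auto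
    then have "\<Gamma> \<turnstile>\<^sub>L C" by (rule deriv.hyp)
    moreover have "\<Gamma> \<turnstile>\<^sub>L C \<supset> (A \<supset> C)" using hyp by (intro deriv.ax1) auto
    ultimately show ?thesis by (rule deriv.mp)
  qed
next
  case (ax1 C D)
  have "\<Gamma> \<turnstile>\<^sub>L C \<supset> (D \<supset> C)" using ax1 by (intro deriv.ax1)
  moreover have "\<Gamma> \<turnstile>\<^sub>L (C \<supset> (D \<supset> C)) \<supset> (A \<supset> (C \<supset> (D \<supset> C)))" using ax1 by (intro deriv.ax1) auto
  ultimately show ?case by (rule deriv.mp)
next
  case (ax2 C D E)
  let ?F = "(C \<supset> (D \<supset> E)) \<supset> ((C \<supset> D) \<supset> (C \<supset> E))"
  have "\<Gamma> \<turnstile>\<^sub>L ?F" using ax2 by (intro deriv.ax2)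
  moreover have "\<Gamma> \<turnstile>\<^sub>L ?F \<supset> (A \<supset> ?F)" using ax2 by (intro deriv.ax1) auto
  ultimately show ?case by (rule deriv.mp)
next
  case (axP C D)
  let ?F = "((C \<supset> D) \<supset> C) \<supset> C"
  have "\<Gamma> \<turnstile>\<^sub>L ?F" using axP by (intro deriv.axP)
  moreover have "\<Gamma> \<turnstile>\<^sub>L ?F \<supset> (A \<supset> ?F)" using axP by (intro deriv.ax1) auto
  ultimately show ?case by (rule deriv.mp)
next
  case (mp C B)
  have CL: "C \<in> L" using inL[OF mp.hyps(1) mp.prems(2)] .
  have BL: "B \<in> L" using inL[OF mp.hyps(2) mp.prems(2)] by simp
  have AL: "A \<in> L" using mp.prems by auto
  have 1: "\<Gamma> \<turnstile>\<^sub>L A \<supset> C" using mp by auto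
  have 2: "\<Gamma> \<turnstile>\<^sub>L A \<supset> (C \<supset> B)" using mp by auto
  have 3: "\<Gamma> \<turnstile>\<^sub>L (A \<supset> (C \<supset> B)) \<supset> ((A \<supset> C) \<supset> (A \<supset> B))"
    using AL BL CL by (intro deriv.ax2)
  show ?case using deriv.mp[OF 1 deriv.mp[OF 2 3]] .
qed

lemma ded: "insert A \<Gamma> \<turnstile>\<^sub>L B \<Longrightarrow> insert A \<Gamma> \<subseteq> L \<Longrightarrow> \<Gamma> \<turnstile>\<^sub>L A \<supset> B"
  using ded_aux by blast

lemma peirce_rule: "\<Gamma> \<turnstile>\<^sub>L (A \<supset> B) \<supset> A \<Longrightarrow> A \<in> L \<Longrightarrow> B \<in> L \<Longrightarrow> \<Gamma> \<turnstile>\<^sub>L A"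
  by (erule deriv.mp) (rule deriv.axP)

lemma cut: "{A} \<turnstile>\<^sub>L B \<Longrightarrow> A \<in> L \<Longrightarrow> \<Gamma> \<turnstile>\<^sub>L A \<Longrightarrow> \<Gamma> \<turnstile>\<^sub>L B"
proof -
  assume 1: "{A} \<turnstile>\<^sub>L B" and a: "A \<in> L" and g: "\<Gamma> \<turnstile>\<^sub>L A"
  have "{} \<turnstile>\<^sub>L A \<supset> B" using 1 by (rule ded) (use a in auto)
  then have "\<Gamma> \<turnstile>\<^sub>L A \<supset> B" by (rule mono) auto
  with g show ?thesis by (rule deriv.mp)
qed

lemma h: "A \<in> \<Gamma> \<Longrightarrow> \<Gamma> \<turnstile>\<^sub>L A" by (rule deriv.hyp)

lemma K1:
  assumes L: "Q \<in> L" "X \<in> L" "Y \<in> L"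
  shows "{((X \<supset> Q) \<supset> Q) \<supset> ((Y \<supset> Q) \<supset> Q)} \<turnstile>\<^sub>L ((X \<supset> Y) \<supset> Q) \<supset> Q"
proof -
  let ?H1 = "((X \<supset> Q) \<supset> Q) \<supset> ((Y \<supset> Q) \<supset> Q)"
  let ?H2 = "(X \<supset> Y) \<supset> Q"
  let ?G = "Q \<supset> Y"
  let ?S = "{?G, ?H2, ?H1}"
  have "insert X (insert (X \<supset> Q) ?S) \<turnstile>\<^sub>L Q"
    by (rule deriv.mp[of _ X, OF h h]) blast+
  then have "insert X (insert (X \<supset> Q) ?S) \<turnstile>\<^sub>L Y"
    by (rule deriv.mp) (rule h, blast)
  then have "insert (X \<supset> Q) ?S \<turnstile>\<^sub>L X \<supset> Y" by (rule ded) (use L in simp)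
  then have "insert (X \<supset> Q) ?S \<turnstile>\<^sub>L Q" by (rule deriv.mp) (rule h, blast)
  then have qqx: "?S \<turnstile>\<^sub>L (X \<supset> Q) \<supset> Q" by (rule ded) (use L in simp)
  have qqy: "?S \<turnstile>\<^sub>L (Y \<supset> Q) \<supset> Q" by (rule deriv.mp[OF qqx]) (rule h, blast)
  have "insert X (insert Y ?S) \<turnstile>\<^sub>L Y" by (rule h) blast
  then have "insert Y ?S \<turnstile>\<^sub>L X \<supset> Y" by (rule ded) (use L in simp)
  then have "insert Y ?S \<turnstile>\<^sub>L Q" by (rule deriv.mp) (rule h, blast)
  then have "?S \<turnstile>\<^sub>L Y \<supset> Q" by (rule ded) (use L in simp)
  then have "?S \<turnstile>\<^sub>L Q" using qqy by (rule deriv.mp)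
  then have "{?H2, ?H1} \<turnstile>\<^sub>L ?G \<supset> Q" by (rule ded) (use L in simp)
  then have "{?H2, ?H1} \<turnstile>\<^sub>L Q" by (rule peirce_rule) (use L in simp)+
  then show ?thesis by (rule ded) (use L in simp)
qed

lemma K2:
  assumes L: "Q \<in> L" "X \<in> L" "Y \<in> L"
  shows "{((X \<supset> Y) \<supset> Q) \<supset> Q} \<turnstile>\<^sub>L ((X \<supset> Q) \<supset> Q) \<supset> ((Y \<supset> Q) \<supset> Q)"
proof -
  let ?H = "((X \<supset> Y) \<supset> Q) \<supset> Q"
  let ?A = "(X \<supset> Q) \<supset> Q"
  let ?B = "Y \<supset> Q"
  let ?S = "{?B, ?A, ?H}"
  have "insert X (insert (X \<supset> Y) ?S) \<turnstile>\<^sub>L Y"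
    by (rule deriv.mp[of _ X, OF h h]) blast+
  then have "insert X (insert (X \<supset> Y) ?S) \<turnstile>\<^sub>L Q"
    by (rule deriv.mp) (rule h, blast)
  then have "insert (X \<supset> Y) ?S \<turnstile>\<^sub>L X \<supset> Q" by (rule ded) (use L in simp)
  then have "insert (X \<supset> Y) ?S \<turnstile>\<^sub>L Q" by (rule deriv.mp) (rule h, blast)
  then have "?S \<turnstile>\<^sub>L (X \<supset> Y) \<supset> Q" by (rule ded) (use L in simp)
  then have "?S \<turnstile>\<^sub>L Q" by (rule deriv.mp) (rule h, blast)
  then have "{?A, ?H} \<turnstile>\<^sub>L ?B \<supset> Q" by (rule ded) (use L in simp)
  then show ?thesis by (rule ded) (use L in simp)
qed

lemma main:
  assumes Q: "Q \<in> L"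
  shows "Z \<in> L \<Longrightarrow> phi Q Z \<in> L \<and> {phi Q Z} \<turnstile>\<^sub>L (Z \<supset> Q) \<supset> Q \<and> {(Z \<supset> Q) \<supset> Q} \<turnstile>\<^sub>L phi Q Z"
proof (induction Z)
  case (Var p)
  then show ?case using Q by (auto intro: deriv.hyp)
next
  case Falsum
  then show ?case by (simp add: L_def)
next
  case (Imp X Y)
  then have XL: "X \<in> L" and YL: "Y \<in> L" by auto
  from Imp.IH(1)[OF XL] have pX: "phi Q X \<in> L" and X1: "{phi Q X} \<turnstile>\<^sub>L (X \<supset> Q) \<supset> Q"
    and X2: "{(X \<supset> Q) \<supset> Q} \<turnstile>\<^sub>L phi Q X" by auto
  from Imp.IH(2)[OF YL] have pY: "phi Q Y \<in> L" and Y1: "{phi Q Y} \<turnstile>\<^sub>L (Y \<supset> Q) \<supset> Q"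
    and Y2: "{(Y \<supset> Q) \<supset> Q} \<turnstile>\<^sub>L phi Q Y" by auto
  let ?qx = "(X \<supset> Q) \<supset> Q" and ?qy = "(Y \<supset> Q) \<supset> Q"
  have a: "{?qx, phi Q X \<supset> phi Q Y} \<turnstile>\<^sub>L ?qy"
  proof -
    have "{?qx, phi Q X \<supset> phi Q Y} \<turnstile>\<^sub>L phi Q X" by (rule cut[OF X2]) (use Q XL in simp, rule h, blast)
    then have "{?qx, phi Q X \<supset> phi Q Y} \<turnstile>\<^sub>L phi Q Y" by (rule deriv.mp) (rule h, blast)
    then show ?thesis by (rule cut[OF Y1 pY])
  qed
  have r0: "{phi Q X \<supset> phi Q Y} \<turnstile>\<^sub>L ?qx \<supset> ?qy" using a by (rule ded) (use Q XL YL pX pY in auto)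
  have r1: "{phi Q X \<supset> phi Q Y} \<turnstile>\<^sub>L ((X \<supset> Y) \<supset> Q) \<supset> Q"
    by (rule cut[OF K1[OF Q XL YL] _ r0]) (use Q XL YL in simp)
  have r3: "{phi Q X, ?qx \<supset> ?qy} \<turnstile>\<^sub>L phi Q Y"
  proof -
    have "{phi Q X, ?qx \<supset> ?qy} \<turnstile>\<^sub>L ?qx" by (rule cut[OF X1 pX]) (rule h, blast)
    then have "{phi Q X, ?qx \<supset> ?qy} \<turnstile>\<^sub>L ?qy" by (rule deriv.mp) (rule h, blast)
    then show ?thesis using cut[OF Y2] Q YL by simp
  qed
  then have "{?qx \<supset> ?qy} \<turnstile>\<^sub>L phi Q X \<supset> phi Q Y" by (rule ded) (use Q XL YL pX pY in auto)
  then have r2: "{((X \<supset> Y) \<supset> Q) \<supset> Q} \<turnstile>\<^sub>L phi Q X \<supset> phi Q Y"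
    by (rule cut[OF _ _ K2[OF Q XL YL]]) (use Q XL YL in auto)
  show ?case using r1 r2 pX pY by simp
qed

theorem theorem5:
  fixes Q Z :: "'v form"
  assumes "Q \<in> L" and "Z \<in> L"
  shows "{phi Q Z} \<turnstile>\<^sub>L (Z \<supset> Q) \<supset> Q \<and> {(Z \<supset> Q) \<supset> Q} \<turnstile>\<^sub>L phi Q Z"
  using main[OF assms(1) assms(2)] by simp

end
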